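(* Let $1\le k<n$ and let $X$ be a fixed real $n\times k$ matrix of full column rank $k$. Let $\mathbf{F}_2^0$ be the class of all distributions $F$ of $Y=X\beta+e$ in $\mathbb{R}^n$, where $\beta$ ranges over $\mathbb{R}^k$ and the distribution of $e$ ranges over all distributions on $\mathbb{R}^n$ with $Ee=0$ and $Eee'=\sigma^2 I_n$ for some $0<\sigma^2<\infty$. Consider an estimator of the form $$\hat\beta=AY+(Y'H_1Y,\dots,Y'H_kY)'$$ where $A$ is a real $k\times n$ matrix with $AX=I_k$ and $H_1,\dots,H_k$ are real $n\times n$ matrices with $\operatorname{tr}(H_j)=0$ and $X'H_jX=0$ for $j=1,\dots,k$. Suppose $E_F(\|\hat\beta\|^2)<\infty$ for every $F\in\mathbf{F}_2^0$. Then $\hat\beta$ is a linear estimator, i.e., $\hat\beta=BY$ for some (non-random) real $k\times n$ matrix $B$.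
   Context: $E_F$ denotes expectation when $Y$ has distribution $F$; $\|\cdot\|$ is the Euclidean norm. *)

theory Defs
  imports "HOL-Analysis.Analysis" "HOL-Probability.Probability"
begin

definition error_dist :: "(real ^ 'n::finite) measure \<Rightarrow> bool" where
  "error_dist M \<longleftrightarrow> prob_space M \<and> sets M = sets borel \<and>
     (\<forall>i. integrable M (\<lambda>e. e $ i) \<and> (\<integral>e. e $ i \<partial>M) = 0) \<and>
     (\<exists>\<sigma>2 > 0. \<forall>i j. integrable M (\<lambda>e. e $ i * e $ j) \<and>
          (\<integral>e. e $ i * e $ j \<partial>M) = (if i = j then \<sigma>2 else 0))"

definition model_class :: "real ^ 'k ^ 'n \<Rightarrow> (real ^ 'n::finite) measure set" where
  "model_class X = {distr M borel (\<lambda>e. X *v \<beta> + e) | M \<beta>. error_dist M}"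

definition quad_est :: "real ^ 'n ^ 'k \<Rightarrow> ('k \<Rightarrow> real ^ 'n ^ 'n) \<Rightarrow> real ^ 'n \<Rightarrow> real ^ 'k" where
  "quad_est A H y = A *v y + (\<chi> j. y \<bullet> (H j *v y))"

end

theory Submission
  imports Defs
begin

lemma delta_r: "(\<Sum>d\<in>UNIV. f d * (if d = b then 1 else (0::real))) = f (b::'n::finite)"
proof -
  have "(\<Sum>d\<in>UNIV. f d * (if d = b then 1 else (0::real))) = (\<Sum>d\<in>UNIV. if d = b then f d else 0)"
    by (rule sum.cong) auto
  also have "\<dots> = f b" by (simp add: sum.delta')
  finally show ?thesis .
qed
lemma delta_l: "(\<Sum>d\<in>UNIV. (if d = b then 1 else (0::real)) * f d) = f (b::'n::finite)"
  using delta_r[of f b] by (simp add: mult.commute)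

lemma dsum: "(\<Sum>c\<in>UNIV. \<Sum>d\<in>UNIV. (if c = a then 1 else 0) * ((if d = b then 1 else 0) * (Hm::real^'n::finite^'n) $ c $ d)) = Hm$a$b"
proof -
  have "(\<Sum>c\<in>UNIV. \<Sum>d\<in>UNIV. (if c = a then 1 else 0) * ((if d = b then 1 else 0) * Hm $ c $ d))
     = (\<Sum>c\<in>UNIV. (if c = a then 1 else 0) * (\<Sum>d\<in>UNIV. (if d = b then 1 else 0) * Hm $ c $ d))"
    by (simp add: sum_distrib_left)
  also have "\<dots> = (\<Sum>c\<in>UNIV. (if c = a then 1 else 0) * Hm $ c $ b)" by (simp only: delta_l)
  also have "\<dots> = Hm $ a $ b" by (rule delta_l)
  finally show ?thesis .
qed

lemma quadform_expand:
  fixes Hm :: "real ^ 'n::finite ^ 'n" and y :: "real ^ 'n"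
  shows "y \<bullet> (Hm *v y) = (\<Sum>a\<in>UNIV. \<Sum>b\<in>UNIV. y $ a * Hm $ a $ b * y $ b)"
  by (simp add: inner_vec_def matrix_vector_mult_def sum_distrib_left mult.assoc)

lemma quadform_pair:
  fixes Hm :: "real ^ 'n::finite ^ 'n"
  shows "(axis a 1 + axis b 1) \<bullet> (Hm *v (axis a 1 + axis b 1)) = Hm$a$a + Hm$a$b + Hm$b$a + Hm$b$b"
proof -
  define I where "I = (\<lambda>x y::'n. if x = y then 1 else (0::real))"
  have e: "(axis a 1 + axis b 1)$c = I c a + I c b" for c
    by (simp add: axis_def I_def)
  have "(axis a 1 + axis b 1) \<bullet> (Hm *v (axis a 1 + axis b 1)) = 
     (\<Sum>c\<in>UNIV. \<Sum>d\<in>UNIV. I c a * (I d a * Hm $ c $ d) + I c a * (I d b * Hm $ c $ d) + I c b * (I d a * Hm $ c $ d) + I c b * (I d b * Hm $ c $ d))"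
    unfolding quadform_expand e by (intro sum.cong refl) (simp add: algebra_simps)
  also have "\<dots> = Hm$a$a + Hm$a$b + Hm$b$a + Hm$b$b"
    unfolding sum.distrib I_def dsum ..
  finally show ?thesis .
qed

lemma quadform_zero:
  fixes Hm :: "real ^ 'n::finite ^ 'n"
  assumes "\<And>a b. (axis a 1 + axis b 1) \<bullet> (Hm *v (axis a 1 + axis b 1)) = (0::real)"
  shows "y \<bullet> (Hm *v y) = 0"
proof -
  have d: "Hm$a$a = 0" for a using assms[of a a] unfolding quadform_pair by simp
  have o: "Hm$a$b + Hm$b$a = 0" for a b using assms[of a b] d[of a] d[of b] unfolding quadform_pair by simp
  have "2 * (y \<bullet> (Hm *v y)) = (\<Sum>a\<in>UNIV. \<Sum>b\<in>UNIV. y $ a * Hm $ a $ b * y $ b) + (\<Sum>a\<in>UNIV. \<Sum>b\<in>UNIV. y $ a * Hm $ a $ b * y $ b)"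
    unfolding quadform_expand by (rule mult_2)
  also have "\<dots> = (\<Sum>a\<in>UNIV. \<Sum>b\<in>UNIV. y $ a * Hm $ a $ b * y $ b) + (\<Sum>b\<in>UNIV. \<Sum>a\<in>UNIV. y $ a * Hm $ a $ b * y $ b)"
    by (rule arg_cong[where f="\<lambda>t. _ + t"], rule sum.swap)
  also have "\<dots> = (\<Sum>a\<in>UNIV. \<Sum>b\<in>UNIV. y $ a * Hm $ a $ b * y $ b + y $ b * Hm $ b $ a * y $ a)"
    by (simp only: sum.distrib)
  also have "\<dots> = (\<Sum>a\<in>UNIV. \<Sum>b\<in>UNIV. y $ a * y $ b * (Hm $ a $ b + Hm $ b $ a))"
    by (intro sum.cong refl) (simp add: algebra_simps)
  also have "\<dots> = 0" by (simp only: o mult_zero_right sum.neutral_const)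
  finally show ?thesis by simp
qed

definition sg :: "bool \<Rightarrow> real" where "sg b = (if b then 1 else -1)"

definition U :: "'n \<times> 'n \<times> bool \<times> bool \<Rightarrow> real ^ 'n::finite" where
  "U v = (case v of (i,j,s,t) \<Rightarrow> sg s *\<^sub>R axis i 1 + sg t *\<^sub>R axis j 1)"

definition dl :: "'n \<Rightarrow> 'n \<Rightarrow> real" where "dl x y = (if x = y then 1 else 0)"

lemma U_nth: "U (i,j,s,t) $ a = sg s * dl i a + sg t * dl j a"
  by (simp add: U_def axis_def dl_def)

lemma sum_UNIV4: "(\<Sum>v\<in>(UNIV :: ('n::finite \<times> 'n \<times> bool \<times> bool) set). f v) = (\<Sum>i\<in>UNIV. \<Sum>j\<in>UNIV. \<Sum>s\<in>UNIV. \<Sum>t\<in>UNIV. f (i,j,s,t))"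
  by (simp add: UNIV_Times_UNIV[symmetric] sum.cartesian_product del: UNIV_Times_UNIV)

lemma sum_bool: "(\<Sum>s\<in>UNIV. f s) = f True + (f False :: real)"
  by (simp add: UNIV_bool)

lemma U_mean: "(\<Sum>v\<in>UNIV. U v $ a) = 0"
  unfolding sum_UNIV4 U_nth sum_bool by (simp add: sg_def)

lemma dl_sum: fixes a b :: "'n::finite" shows "(\<Sum>i\<in>UNIV. dl i a * dl i b) = dl a b"
proof -
  have "(\<Sum>i\<in>UNIV. dl i a * dl i b) = (\<Sum>i\<in>UNIV. (if i = a then 1 else 0) * dl i b)"
    by (simp add: dl_def)
  also have "\<dots> = dl a b" by (rule delta_l)
  finally show ?thesis .
qed

lemma U_cov: fixes a b :: "'n::finite" shows "(\<Sum>v\<in>UNIV. U v $ a * U v $ b) = 8 * real CARD('n) * dl a b"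
proof -
  have "(\<Sum>v\<in>UNIV. U v $ a * U v $ b) = (\<Sum>i\<in>(UNIV::'n set). \<Sum>j\<in>(UNIV::'n set). 4 * (dl i a * dl i b) + 4 * (dl j a * dl j b))"
    unfolding sum_UNIV4 U_nth sum_bool by (intro sum.cong refl) (simp add: sg_def algebra_simps)
  also have "\<dots> = 8 * real CARD('n::finite) * dl a b"
    by (simp add: sum.distrib sum_distrib_left[symmetric] dl_sum)
  finally show ?thesis .
qed


lemma pair_ind:
  fixes \<rho> :: "nat pmf" and \<phi> :: "nat \<Rightarrow> real" and w :: "'b::finite"
  assumes \<phi>0: "\<And>m. \<phi> m \<ge> 0" and \<phi>i: "integrable \<rho> \<phi>"
  shows "has_bochner_integral (pair_pmf \<rho> (pmf_of_set UNIV)) (\<lambda>x. \<phi> (fst x) * indicator {w} (snd x))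
           ((\<integral>m. \<phi> m \<partial>\<rho>) / real CARD('b))"
proof (rule has_bochner_integral_nn_integral)
  show "(\<lambda>x. \<phi> (fst x) * indicator {w} (snd x)) \<in> borel_measurable (pair_pmf \<rho> (pmf_of_set UNIV))" by simp
  show "AE x in pair_pmf \<rho> (pmf_of_set UNIV). 0 \<le> \<phi> (fst x) * indicator {w} (snd x)"
    using \<phi>0 by simp
  have I0: "0 \<le> (\<integral>m. \<phi> m \<partial>\<rho>)" using \<phi>0 by simp
  then show "0 \<le> (\<integral>m. \<phi> m \<partial>\<rho>) / real CARD('b)" by simp
  have inner: "(\<integral>\<^sup>+ v. ennreal (\<phi> m * indicator {w} v) \<partial>pmf_of_set UNIV) = ennreal (\<phi> m) / of_nat CARD('b)" for m
  proof -
    have "(\<integral>\<^sup>+ v. ennreal (\<phi> m * indicator {w} v) \<partial>pmf_of_set UNIV) = (\<Sum>v\<in>UNIV. ennreal (\<phi> m * indicator {w} v)) / of_nat CARD('b)"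
      by (rule nn_integral_pmf_of_set) auto
    also have "(\<Sum>v\<in>UNIV. ennreal (\<phi> m * indicator {w} v)) = ennreal (\<phi> m)"
    proof -
      have "(\<Sum>v\<in>UNIV. ennreal (\<phi> m * indicator {w} v)) = (\<Sum>v\<in>UNIV. if v = w then ennreal (\<phi> m) else 0)"
        by (rule sum.cong) (auto simp: indicator_def)
      also have "\<dots> = ennreal (\<phi> m)" by (simp add: sum.delta')
      finally show ?thesis .
    qed
    finally show ?thesis .
  qed
  have "(\<integral>\<^sup>+ x. ennreal (\<phi> (fst x) * indicator {w} (snd x)) \<partial>pair_pmf \<rho> (pmf_of_set UNIV))
      = (\<integral>\<^sup>+ m. \<integral>\<^sup>+ v. ennreal (\<phi> m * indicator {w} v) \<partial>pmf_of_set UNIV \<partial>\<rho>)"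
    by (simp add: nn_integral_pair_pmf')
  also have "\<dots> = (\<integral>\<^sup>+ m. ennreal (\<phi> m) / of_nat CARD('b) \<partial>\<rho>)"
    by (simp only: inner)
  also have "\<dots> = (\<integral>\<^sup>+ m. ennreal (\<phi> m) \<partial>\<rho>) / of_nat CARD('b)"
    by (rule nn_integral_divide) simp
  also have "(\<integral>\<^sup>+ m. ennreal (\<phi> m) \<partial>\<rho>) = ennreal (\<integral>m. \<phi> m \<partial>\<rho>)"
    using \<phi>i \<phi>0 by (intro nn_integral_eq_integral) auto
  also have "ennreal (\<integral>m. \<phi> m \<partial>\<rho>) / of_nat CARD('b) = ennreal ((\<integral>m. \<phi> m \<partial>\<rho>) / real CARD('b))"
    using I0 by (metis divide_ennreal ennreal_of_nat_eq_real_of_nat of_nat_0_less_iff zero_less_card_finite)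
  finally show "(\<integral>\<^sup>+ x. ennreal (\<phi> (fst x) * indicator {w} (snd x)) \<partial>pair_pmf \<rho> (pmf_of_set UNIV)) =
      ennreal ((\<integral>m. \<phi> m \<partial>\<rho>) / real CARD('b))" .
qed

lemma pair_int:
  fixes \<rho> :: "nat pmf" and \<phi> :: "nat \<Rightarrow> real" and h :: "'b::finite \<Rightarrow> real"
  assumes \<phi>0: "\<And>m. \<phi> m \<ge> 0" and \<phi>i: "integrable \<rho> \<phi>"
  shows "has_bochner_integral (pair_pmf \<rho> (pmf_of_set UNIV)) (\<lambda>x. \<phi> (fst x) * h (snd x))
           ((\<integral>m. \<phi> m \<partial>\<rho>) * (\<Sum>w\<in>UNIV. h w) / real CARD('b))"
proof -
  have e: "\<phi> (fst x) * h (snd x) = (\<Sum>w\<in>UNIV. h w * (\<phi> (fst x) * indicator {w} (snd x)))" for x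
  proof -
    have "(\<Sum>w\<in>UNIV. h w * (\<phi> (fst x) * indicator {w} (snd x))) = (\<Sum>w\<in>UNIV. if w = snd x then h w * \<phi> (fst x) else 0)"
      by (rule sum.cong) (auto simp: indicator_def)
    also have "\<dots> = h (snd x) * \<phi> (fst x)" by (simp add: sum.delta')
    finally show ?thesis by simp
  qed
  have "has_bochner_integral (pair_pmf \<rho> (pmf_of_set UNIV)) (\<lambda>x. \<Sum>w\<in>UNIV. h w * (\<phi> (fst x) * indicator {w} (snd x)))
          (\<Sum>w\<in>UNIV. h w * ((\<integral>m. \<phi> m \<partial>\<rho>) / real CARD('b)))"
    by (intro has_bochner_integral_sum has_bochner_integral_mult_right pair_ind \<phi>0 \<phi>i)
  moreover have "(\<Sum>w\<in>UNIV. h w * ((\<integral>m. \<phi> m \<partial>\<rho>) / real CARD('b))) = (\<integral>m. \<phi> m \<partial>\<rho>) * (\<Sum>w\<in>UNIV. h w) / real CARD('b)"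
    by (simp add: sum_distrib_right[symmetric] sum_divide_distrib[symmetric] algebra_simps)
  ultimately show ?thesis unfolding e[symmetric] by simp
qed


lemma geo_int:
  fixes c :: real assumes c0: "0 \<le> c" and c4: "c < 4"
  shows "integrable (measure_pmf (geometric_pmf (3/4))) (\<lambda>m. c ^ m)"
proof -
  have s: "summable (\<lambda>m. (c/4) ^ m * (3/4))"
    using c0 c4 by (intro summable_mult2 summable_geometric) simp
  have "(\<integral>\<^sup>+ m. ennreal (c ^ m) \<partial>measure_pmf (geometric_pmf (3/4)))
      = (\<Sum>m. ennreal ((c/4) ^ m * (3/4)))"
  proof -
    have "(\<integral>\<^sup>+ m. ennreal (c ^ m) \<partial>measure_pmf (geometric_pmf (3/4)))
       = (\<integral>\<^sup>+ m. ennreal (pmf (geometric_pmf (3/4)) m) * ennreal (c ^ m) \<partial>count_space UNIV)"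
      by (rule nn_integral_measure_pmf)
    also have "\<dots> = (\<Sum>m. ennreal (pmf (geometric_pmf (3/4)) m) * ennreal (c ^ m))"
      by (rule nn_integral_count_space_nat)
    also have "\<dots> = (\<Sum>m. ennreal ((c/4) ^ m * (3/4)))"
    proof (rule suminf_cong)
      fix m
      have "pmf (geometric_pmf (3/4)) m * c ^ m = (c/4) ^ m * (3/4)"
        by (simp add: power_divide field_simps)
      then show "ennreal (pmf (geometric_pmf (3/4)) m) * ennreal (c ^ m) = ennreal ((c/4) ^ m * (3/4))"
        using c0 by (metis ennreal_mult pmf_nonneg zero_le_power)
    qed
    finally show ?thesis .
  qed
  also have "\<dots> = ennreal (\<Sum>m. (c/4) ^ m * (3/4))"
    using s c0 by (intro suminf_ennreal2) auto
  finally show ?thesis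
    using c0 by (intro integrableI_nn_integral_finite) auto
qed

definition rr :: "nat \<Rightarrow> real" where "rr m = (3/2) ^ m"

lemma rr_int: "integrable (measure_pmf (geometric_pmf (3/4))) rr"
  unfolding rr_def by (rule geo_int) auto

lemma rr2_int: "integrable (measure_pmf (geometric_pmf (3/4))) (\<lambda>m. rr m * rr m)"
proof -
  have "(\<lambda>m. rr m * rr m) = (\<lambda>m. (9/4) ^ m)" by (simp add: rr_def power_mult_distrib[symmetric])
  then show ?thesis by (simp add: geo_int)
qed

lemma rr_ge1: "1 \<le> rr m" unfolding rr_def by simp

lemma rr_nonneg: "0 \<le> rr m" unfolding rr_def by simp


lemma rr2_ge1: "1 \<le> rr m * rr m"
  using mult_mono[OF rr_ge1 rr_ge1, of m m] rr_ge1[of m] by simp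

lemma rr2_pos: "0 < (\<integral>m. rr m * rr m \<partial>measure_pmf (geometric_pmf (3/4)))"
proof -
  have "(\<integral>m. 1 \<partial>measure_pmf (geometric_pmf (3/4))) \<le> (\<integral>m. rr m * rr m \<partial>measure_pmf (geometric_pmf (3/4)))"
    using rr2_int rr_ge1 by (intro integral_mono) (auto simp: rr2_ge1)
  then show ?thesis by simp
qed

abbreviation "\<rho> \<equiv> geometric_pmf (3/4::real)"
definition PP :: "(nat \<times> ('n::finite \<times> 'n \<times> bool \<times> bool)) pmf" where
  "PP = pair_pmf \<rho> (pmf_of_set UNIV)"
definition gg :: "nat \<times> ('n::finite \<times> 'n \<times> bool \<times> bool) \<Rightarrow> real ^ 'n" where
  "gg x = rr (fst x) *\<^sub>R U (snd x)"
definition MM :: "(real ^ 'n::finite) measure" where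
  "MM = distr (measure_pmf PP) borel gg"

lemma MM_error: "error_dist (MM :: (real ^ 'n::finite) measure)"
proof -
  let ?N = "real CARD('n \<times> 'n \<times> bool \<times> bool)"
  have meas: "gg \<in> measurable (measure_pmf PP) borel" by simp
  have nth_meas: "(\<lambda>e::real^'n. e $ i) \<in> borel_measurable borel" for i by simp
  have nth2_meas: "(\<lambda>e::real^'n. e $ i * e $ j) \<in> borel_measurable borel" for i j by simp
  have mean: "has_bochner_integral (measure_pmf PP) (\<lambda>x. gg x $ i) 0" for i :: 'n
  proof -
    have "has_bochner_integral (measure_pmf PP) (\<lambda>x. rr (fst x) * (\<lambda>v. U v $ i) (snd x))
           ((\<integral>m. rr m \<partial>\<rho>) * (\<Sum>w\<in>UNIV. U w $ i) / ?N)"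
      unfolding PP_def by (rule pair_int) (auto simp: rr_int rr_nonneg)
    then show ?thesis by (simp add: gg_def U_mean)
  qed
  define \<sigma>2 where "\<sigma>2 = (\<integral>m. rr m * rr m \<partial>\<rho>) * (8 * real CARD('n)) / ?N"
  have \<sigma>pos: "\<sigma>2 > 0" unfolding \<sigma>2_def using rr2_pos by simp
  have cov: "has_bochner_integral (measure_pmf PP) (\<lambda>x. gg x $ i * gg x $ j) (if i = j then \<sigma>2 else 0)" for i j :: 'n
  proof -
    have h: "has_bochner_integral (measure_pmf PP) (\<lambda>x. (\<lambda>m. rr m * rr m) (fst x) * (\<lambda>v. U v $ i * U v $ j) (snd x))
           ((\<integral>m. rr m * rr m \<partial>\<rho>) * (\<Sum>w\<in>UNIV. U w $ i * U w $ j) / ?N)"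
      unfolding PP_def by (rule pair_int) (auto simp: rr2_int rr_nonneg)
    have f: "(\<lambda>x. gg x $ i * gg x $ j) = (\<lambda>x. (\<lambda>m. rr m * rr m) (fst x) * (\<lambda>v. U v $ i * U v $ j) (snd x))"
      by (auto simp: gg_def algebra_simps)
    have v: "(\<integral>m. rr m * rr m \<partial>\<rho>) * (\<Sum>w\<in>UNIV. U w $ i * U w $ j) / ?N = (if i = j then \<sigma>2 else 0)"
      unfolding U_cov \<sigma>2_def dl_def by simp
    show ?thesis unfolding f v[symmetric] by (rule h)
  qed
  show ?thesis
    unfolding error_dist_def MM_def
  proof (intro conjI allI exI[of _ \<sigma>2])
    show "prob_space (distr (measure_pmf PP) borel gg)"
      by (rule measure_pmf.prob_space_distr[OF meas])
    show "sets (distr (measure_pmf PP) borel gg) = sets borel" by simp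
    fix i :: 'n
    show "integrable (distr (measure_pmf PP) borel gg) (\<lambda>e. e $ i)"
      using mean[of i] by (simp add: integrable_distr_eq[OF meas nth_meas] has_bochner_integral_iff)
    show "(\<integral>e. e $ i \<partial>distr (measure_pmf PP) borel gg) = 0"
      using mean[of i] by (simp add: integral_distr[OF meas nth_meas] has_bochner_integral_iff)
  next
    show "\<sigma>2 > 0" by (rule \<sigma>pos)
  next
    fix i j :: 'n
    show "integrable (distr (measure_pmf PP) borel gg) (\<lambda>e. e $ i * e $ j)"
      using cov[of i j] by (simp add: integrable_distr_eq[OF meas nth2_meas] has_bochner_integral_iff)
    show "(\<integral>e. e $ i * e $ j \<partial>distr (measure_pmf PP) borel gg) = (if i = j then \<sigma>2 else 0)"
      using cov[of i j] by (simp add: integral_distr[OF meas nth2_meas] has_bochner_integral_iff)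
  qed
qed

lemma key_ineq:
  fixes r L q :: real
  assumes "0 \<le> r" "0 \<le> L * q"
  shows "r^4 * q^2 \<le> (r*L + r^2*q)^2"
proof -
  have e: "(r*L + r^2*q)^2 = (r*L)^2 + 2*r^3*(L*q) + r^4*q^2"
    by (simp add: power2_eq_square power3_eq_cube power4_eq_xxxx algebra_simps)
  have "0 \<le> 2*r^3*(L*q)" using assms by simp
  then show ?thesis unfolding e by (simp add: add_increasing)
qed

lemma quad_est_meas:
  "(\<lambda>y. ennreal ((norm (quad_est A H y))\<^sup>2)) \<in> borel_measurable borel"
proof -
  have "continuous_on UNIV (quad_est A H)"
    unfolding quad_est_def
    by (intro continuous_intros continuous_on_vec_lambda matrix_vector_mult_linear_continuous_on)
  then have "quad_est A H \<in> borel_measurable borel" by (rule borel_measurable_continuous_onI)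
  then show ?thesis by measurable
qed

lemma quad_est_scale:
  "quad_est A H (r *\<^sub>R w) $ j = r * (A *v w) $ j + r^2 * (w \<bullet> (H j *v w))"
  by (simp add: quad_est_def matrix_vector_mult_scaleR power2_eq_square)

lemma inf_int:
  fixes A :: "real^'n::finite^'k::finite" and H :: "'k \<Rightarrow> real^'n^'n" and X :: "real^'k^'n"
  assumes q0: "(axis a 1 + axis b 1) \<bullet> (H jj *v (axis a 1 + axis b 1)) \<noteq> 0"
  shows "(\<integral>\<^sup>+ y. ennreal ((norm (quad_est A H y))\<^sup>2) \<partial>distr MM borel (\<lambda>e. X *v 0 + e)) = \<infinity>"
proof -
  define u :: "real^'n" where "u = axis a 1 + axis b 1"
  define q where "q = u \<bullet> (H jj *v u)"
  have qnz: "q \<noteq> 0" using q0 by (simp add: q_def u_def)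
  have Up: "U (a,b,True,True) = u" by (simp add: U_def sg_def u_def)
  have Um: "U (a,b,False,False) = (-1) *\<^sub>R u" by (simp add: U_def sg_def u_def)
  obtain v0 where v0q: "U v0 \<bullet> (H jj *v U v0) = q" and v0s: "0 \<le> (A *v U v0) $ jj * q"
  proof (cases "0 \<le> (A *v u) $ jj * q")
    case True then show ?thesis using that[of "(a,b,True,True)"] Up q_def by simp
  next
    case False then show ?thesis using that[of "(a,b,False,False)"] Um q_def
      by (simp add: vec.neg)
  qed
  define N where "N = real CARD('n \<times> 'n \<times> bool \<times> bool)"
  have Npos: "N > 0" unfolding N_def by simp
  define c where "c = (3/4) / N * q^2"
  have cpos: "c > 0" unfolding c_def using Npos qnz by simp
  define f where "f = (\<lambda>y. ennreal ((norm (quad_est A H y))\<^sup>2))"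
  have fmeas: "f \<in> borel_measurable borel" unfolding f_def by (rule quad_est_meas)
  have pt: "ennreal c \<le> ennreal (pmf PP (m, v0)) * f (gg (m, v0))" for m
  proof -
    have pm: "pmf PP (m, v0) = (1/4)^m * (3/4) / N"
      by (simp add: PP_def pmf_pair N_def)
    have c1: "(quad_est A H (gg (m, v0)) $ jj)^2 \<le> (norm (quad_est A H (gg (m, v0))))^2"
      using component_le_norm_cart[of "quad_est A H (gg (m, v0))" jj]
      by (metis abs_ge_zero power2_abs power_mono)
    have e: "quad_est A H (gg (m, v0)) $ jj = rr m * (A *v U v0) $ jj + (rr m)^2 * q"
      by (simp add: gg_def quad_est_scale v0q)
    have k: "(rr m)^4 * q^2 \<le> (rr m * (A *v U v0) $ jj + (rr m)^2 * q)^2"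
      by (rule key_ineq) (use v0s rr_nonneg in auto)
    have "(rr m)^4 * q^2 \<le> (quad_est A H (gg (m, v0)) $ jj)^2" unfolding e by (rule k)
    then have fb: "(rr m)^4 * q^2 \<le> (norm (quad_est A H (gg (m, v0))))^2" using c1 by (rule order_trans)
    have r4: "(rr m)^4 = (81/16)^m"
    proof -
      have "((3/2::real)^m)^4 = ((3/2)^4)^m" by (simp only: power_mult[symmetric] mult.commute)
      moreover have "(3/2::real)^4 = 81/16" by (simp add: power4_eq_xxxx)
      ultimately show ?thesis by (simp add: rr_def)
    qed
    have p: "(1/4::real)^m * (81/16)^m = (81/64)^m" by (simp add: power_mult_distrib[symmetric])
    have "c \<le> c * (81/64)^m" using cpos by simp
    also have "c * (81/64)^m = (1/4)^m * (3/4) / N * ((rr m)^4 * q^2)"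
      by (simp add: c_def r4 p[symmetric])
    also have "\<dots> \<le> (1/4)^m * (3/4) / N * (norm (quad_est A H (gg (m, v0))))^2"
      using fb Npos by (intro mult_left_mono) auto
    finally have "c \<le> pmf PP (m, v0) * (norm (quad_est A H (gg (m, v0))))^2" unfolding pm .
    then show ?thesis unfolding f_def by (simp add: ennreal_mult[symmetric] ennreal_leI)
  qed
  have "(\<integral>\<^sup>+ y. f y \<partial>distr MM borel (\<lambda>e. X *v 0 + e)) = (\<integral>\<^sup>+ e. f (X *v 0 + e) \<partial>MM)"
    by (rule nn_integral_distr) (auto simp: MM_def fmeas)
  also have "\<dots> = (\<integral>\<^sup>+ x. f (X *v 0 + gg x) \<partial>measure_pmf PP)"
    unfolding MM_def by (rule nn_integral_distr) (auto intro: measurable_compose[OF _ fmeas])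
  also have "\<dots> = (\<integral>\<^sup>+ x. ennreal (pmf PP x) * f (gg x) \<partial>count_space UNIV)"
    by (simp add: nn_integral_measure_pmf)
  also have "\<dots> \<ge> (\<integral>\<^sup>+ x. ennreal c * indicator ((UNIV::nat set) \<times> {v0}) x \<partial>count_space UNIV)"
  proof (intro nn_integral_mono)
    fix x :: "nat \<times> ('n \<times> 'n \<times> bool \<times> bool)"
    show "ennreal c * indicator ((UNIV::nat set) \<times> {v0}) x \<le> ennreal (pmf PP x) * f (gg x)"
    proof (cases "snd x = v0")
      case True
      then obtain m where xm: "x = (m, v0)" by (metis prod.collapse)
      show ?thesis using pt[of m] unfolding xm by (simp add: indicator_def)
    next
      case False
      then show ?thesis by (simp add: indicator_def mem_Times_iff)
    qed
  qed
  moreover have "(\<integral>\<^sup>+ x. ennreal c * indicator ((UNIV::nat set) \<times> {v0}) x \<partial>count_space UNIV) = \<infinity>"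
  proof -
    have inf: "infinite (UNIV \<times> {v0} :: (nat \<times> ('n \<times> 'n \<times> bool \<times> bool)) set)"
      by (simp add: finite_cartesian_product_iff)
    have "(\<integral>\<^sup>+ x. ennreal c * indicator ((UNIV::nat set) \<times> {v0}) x \<partial>count_space UNIV) = ennreal c * emeasure (count_space UNIV) ((UNIV::nat set) \<times> {v0})"
      by (rule nn_integral_cmult_indicator) simp
    also have "\<dots> = \<infinity>" using inf cpos by (simp add: emeasure_count_space_infinite ennreal_mult_top)
    finally show ?thesis .
  qed
  ultimately show ?thesis unfolding f_def by (simp add: top_unique)
qed

theorem propositionB1:
  fixes X :: "real ^ 'k::finite ^ 'n::finite"
    and A :: "real ^ 'n ^ 'k"
    and H :: "'k \<Rightarrow> real ^ 'n ^ 'n"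
  assumes "CARD('k) < CARD('n)"
    and "rank X = CARD('k)"
    and "A ** X = mat 1"
    and "\<And>j. trace (H j) = 0"
    and "\<And>j. transpose X ** H j ** X = 0"
    and "\<And>F. F \<in> model_class X \<Longrightarrow>
           (\<integral>\<^sup>+ y. ennreal ((norm (quad_est A H y))\<^sup>2) \<partial>F) < \<infinity>"
  shows "\<exists>B :: real ^ 'n ^ 'k. \<forall>y. quad_est A H y = B *v y"
proof (cases "\<forall>j y. y \<bullet> (H j *v y) = 0")
  case True
  show ?thesis
    by (rule exI[of _ A]) (simp add: quad_est_def True vec_eq_iff)
next
  case False
  then obtain j0 y0 where nz: "y0 \<bullet> (H j0 *v y0) \<noteq> 0" by blast
  then obtain a b where q0: "(axis a 1 + axis b 1) \<bullet> (H j0 *v (axis a 1 + axis b 1)) \<noteq> (0::real)"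
    using quadform_zero[of "H j0" y0] by blast
  have "distr MM borel (\<lambda>e. X *v 0 + e) \<in> model_class X"
    unfolding model_class_def using MM_error by blast
  from assms(6)[OF this] inf_int[where H=H and A=A and X=X and a=a and b=b and jj=j0, OF q0] show ?thesis by simp
qed
end
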